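(* Let $m_1\le m_2\le\dots\le m_k$ be nonnegative integers, $n=\sum_r m_r$, and $T_1,\dots,T_n\in\{H,L\}$ with $0\le H<L$. Let $(x_1,\dots,x_n)$ be the decision sequence output by Algorithm 1 on this input. If $i<j$ and $T_i=T_j$, then $x_i\le x_j$.
   Context: Algorithm 1 (simulation-based threshold algorithm). Input: integers $0\le m_1\le\dots\le m_k$ and a sequence $T_1,\dots,T_n$ with $n=\sum_r m_r$. Set $q^{(1)}_r=m_r$ for all $r$. For $t=1,\dots,n$: set $x_t=\mathrm{TA}(q^{(t)}_1,\dots,q^{(t)}_k;\,T_t,T_{t+1},\dots,T_n)$ and $q^{(t+1)}_r=q^{(t)}_r-\mathbf{1}(x_t=r)$ for each $r$. Output $\mathbf{x}=(x_1,\dots,x_n)$. Subroutine $\mathrm{TA}(m_1,\dots,m_k;\,S_1,\dots,S_N)$ (ThresholdAllocation), with the convention $m_0:=0$: for $\gamma=k,k-1,\dots,1$: if $m_\gamma=m_{\gamma-1}$, go to the next $\gamma$; otherwise, for $h=\gamma,\gamma+1,\dots,k$: let $Z_L=\sum_{i=1}^{h-1}\min\{m_i,m_{\gamma-1}\}$ and $Z_H=\sum_{i=\gamma}^{h}(m_i-m_{\gamma-1})$; if $|\{i\in\{1,\dots,Z_L+Z_H\}: S_i>S_1\}|\ge Z_L$, return $\gamma$ (agent to which $S_1$ is assigned). *)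

theory Defs
  imports Complex_Main
begin

text \<open>The quotas are a function m (only m 1, ..., m k are used; m 0 is replaced by 0,
  the convention m_0 := 0). The signal list S is a list with S_i = S ! (i-1).
  If no gamma is returned (only possible when all quotas are 0), the result is 0.\<close>

definition TA_Z_L :: "(nat \<Rightarrow> nat) \<Rightarrow> nat \<Rightarrow> nat \<Rightarrow> nat" where
  "TA_Z_L mm \<gamma> h = (\<Sum>i\<in>{1..<h}. min (mm i) (mm (\<gamma> - 1)))"

definition TA_Z_H :: "(nat \<Rightarrow> nat) \<Rightarrow> nat \<Rightarrow> nat \<Rightarrow> nat" where
  "TA_Z_H mm \<gamma> h = (\<Sum>i\<in>{\<gamma>..h}. mm i - mm (\<gamma> - 1))"

definition TA_count :: "real list \<Rightarrow> nat \<Rightarrow> nat" where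
  "TA_count S z = card {i. 1 \<le> i \<and> i \<le> z \<and> i \<le> length S \<and> S ! (i - 1) > S ! 0}"

definition TA_test :: "nat \<Rightarrow> (nat \<Rightarrow> nat) \<Rightarrow> real list \<Rightarrow> nat \<Rightarrow> bool" where
  "TA_test k mm S \<gamma> =
     (mm \<gamma> \<noteq> mm (\<gamma> - 1) \<and>
      (\<exists>h\<in>{\<gamma>..k}. TA_count S (TA_Z_L mm \<gamma> h + TA_Z_H mm \<gamma> h) \<ge> TA_Z_L mm \<gamma> h))"

definition TA :: "nat \<Rightarrow> (nat \<Rightarrow> nat) \<Rightarrow> real list \<Rightarrow> nat" where
  "TA k m S =
     (let mm = (\<lambda>i. if i = 0 then 0 else m i);
          cands = filter (TA_test k mm S) (rev [1..<Suc k])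
      in if cands = [] then 0 else hd cands)"

text \<open>Algorithm 1. alg_q k m n T s is the quota vector q^(s+1) (so alg_q ... 0 = m = q^(1)),
  and alg_x k m n T t is the decision x_t for 1 \<le> t \<le> n, computed as
  TA(q^(t); T_t, ..., T_n). The sequence T is indexed T 1, ..., T n.\<close>

fun alg_q :: "nat \<Rightarrow> (nat \<Rightarrow> nat) \<Rightarrow> nat \<Rightarrow> (nat \<Rightarrow> real) \<Rightarrow> nat \<Rightarrow> (nat \<Rightarrow> nat)" where
  "alg_q k m n T 0 = m"
| "alg_q k m n T (Suc s) =
     (let q = alg_q k m n T s;
          x = TA k q (map T [Suc s..<Suc n])
      in (\<lambda>r. q r - (if x = r then 1 else 0)))"

definition alg_x :: "nat \<Rightarrow> (nat \<Rightarrow> nat) \<Rightarrow> nat \<Rightarrow> (nat \<Rightarrow> real) \<Rightarrow> nat \<Rightarrow> nat" where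
  "alg_x k m n T t = TA k (alg_q k m n T (t - 1)) (map T [t..<Suc n])"

end

theory Submission
  imports Defs
begin

definition mmof :: "(nat \<Rightarrow> nat) \<Rightarrow> nat \<Rightarrow> nat" where
  "mmof q = (\<lambda>i. if i = 0 then 0 else q i)"

definition srt :: "nat \<Rightarrow> (nat \<Rightarrow> nat) \<Rightarrow> bool" where
  "srt k mm = (\<forall>r<k. mm r \<le> mm (Suc r))"

definition cnt :: "real \<Rightarrow> real list \<Rightarrow> nat \<Rightarrow> nat" where
  "cnt p R z = length (filter (\<lambda>x. p < x) (take z R))"

lemma srt_mono: "srt k mm \<Longrightarrow> i \<le> j \<Longrightarrow> j \<le> k \<Longrightarrow> mm i \<le> mm j"
proof (induction j)
  case 0 then show ?case by simp
next
  case (Suc j)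
  show ?case
  proof (cases "i = Suc j")
    case False
    then have "mm i \<le> mm j" using Suc by simp
    also have "mm j \<le> mm (Suc j)" using Suc.prems unfolding srt_def by simp
    finally show ?thesis .
  qed simp
qed

lemma TA_count_eq: "TA_count S z = cnt (S!0) S z"
proof -
  have "{i. 1 \<le> i \<and> i \<le> z \<and> i \<le> length S \<and> S ! (i - 1) > S ! 0}
        = Suc ` {i. i < min z (length S) \<and> S!0 < S!i}"
    apply (auto simp: image_iff)
    apply (rule_tac x="x - 1" in exI)
    apply auto
    done
  then have "TA_count S z = card {i. i < min z (length S) \<and> S!0 < S!i}"
    unfolding TA_count_def by (simp add: card_image)
  also have "\<dots> = cnt (S!0) S z"
    unfolding cnt_def length_filter_conv_card by (rule arg_cong[where f=card]) auto
  finally show ?thesis .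
qed

lemma cnt_Cons: "1 \<le> z \<Longrightarrow> cnt p (x # R) z = (if p < x then 1 else 0) + cnt p R (z - 1)"
  by (cases z) (auto simp: cnt_def)

lemma cnt_mono: "z \<le> z' \<Longrightarrow> cnt p R z \<le> cnt p R z'"
proof -
  assume "z \<le> z'"
  then have "take z' R = take z R @ take (z' - z) (drop z R)"
    by (metis le_add_diff_inverse take_add)
  then show ?thesis unfolding cnt_def by simp
qed

lemma TA_eq: "TA k q S = (let cands = filter (TA_test k (mmof q) S) (rev [1..<Suc k])
      in if cands = [] then 0 else hd cands)"
  unfolding TA_def mmof_def by simp

lemma TA_ge:
  assumes "1 \<le> g" "g \<le> k" "TA_test k (mmof q) S g"
  shows "g \<le> TA k q S"
proof -
  define cs where "cs = filter (TA_test k (mmof q) S) (rev [1..<Suc k])"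
  have srtd: "sorted_wrt (>) cs" unfolding cs_def
    by (rule sorted_wrt_filter) (simp add: sorted_wrt_rev del: upt_Suc)
  have gin: "g \<in> set cs" using assms unfolding cs_def by (simp del: upt_Suc)
  then obtain y ys where cs: "cs = y # ys" by (cases cs) auto
  have "g \<le> y" using gin srtd unfolding cs by auto
  then show ?thesis unfolding TA_eq cs_def[symmetric] Let_def cs by simp
qed

lemma TA_nz:
  assumes "TA k q S \<noteq> 0"
  shows "1 \<le> TA k q S \<and> TA k q S \<le> k \<and> TA_test k (mmof q) S (TA k q S)"
proof -
  define cs where "cs = filter (TA_test k (mmof q) S) (rev [1..<Suc k])"
  have ne: "cs \<noteq> []" using assms unfolding TA_eq cs_def[symmetric] Let_def by auto
  have eq: "TA k q S = hd cs" using ne unfolding TA_eq cs_def[symmetric] Let_def by auto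
  have "hd cs \<in> set cs" using ne by simp
  then have "hd cs \<in> {1..<Suc k} \<and> TA_test k (mmof q) S (hd cs)"
    unfolding cs_def by (simp del: upt_Suc)
  then show ?thesis unfolding eq by auto
qed

lemma TA_pos:
  assumes "1 \<le> r" "r \<le> k" "q r > 0"
  shows "TA k q S \<noteq> 0"
proof -
  define g where "g = (LEAST i. mmof q i > 0)"
  have ex: "mmof q r > 0" using assms by (simp add: mmof_def)
  have gpos: "mmof q g > 0" unfolding g_def by (rule LeastI[of _ r], rule ex)
  have gle: "g \<le> r" unfolding g_def by (rule Least_le, rule ex)
  have g1: "1 \<le> g" using gpos by (cases g) (auto simp: mmof_def)
  have "\<not> mmof q (g - 1) > 0" unfolding g_def by (rule not_less_Least) (use g1 g_def in auto)
  then have z: "mmof q (g - 1) = 0" by simp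
  have "TA_Z_L (mmof q) g g = 0" unfolding TA_Z_L_def z by simp
  then have "TA_test k (mmof q) S g"
    unfolding TA_test_def using gpos z g1 gle assms by (auto intro!: bexI[of _ g])
  then have "g \<le> TA k q S" using TA_ge g1 gle assms by auto
  then show ?thesis using g1 by simp
qed

lemma ZL_formula:
  assumes "srt k mm" "1 \<le> g" "g \<le> h" "h \<le> k"
  shows "TA_Z_L mm g h = (\<Sum>i\<in>{1..<g}. mm i) + (h - g) * mm (g - 1)"
proof -
  have "TA_Z_L mm g h = (\<Sum>i\<in>{1..<g}. min (mm i) (mm (g - 1)))
          + (\<Sum>i\<in>{g..<h}. min (mm i) (mm (g - 1)))"
    unfolding TA_Z_L_def using sum.atLeastLessThan_concat[of 1 g h "\<lambda>i. min (mm i) (mm (g - 1))"] assms by simp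
  also have "(\<Sum>i\<in>{1..<g}. min (mm i) (mm (g - 1))) = (\<Sum>i\<in>{1..<g}. mm i)"
    by (rule sum.cong) (use assms srt_mono[of k mm] in auto)
  also have "(\<Sum>i\<in>{g..<h}. min (mm i) (mm (g - 1))) = (\<Sum>i\<in>{g..<h}. mm (g - 1))"
    by (rule sum.cong) (use assms srt_mono[of k mm] in auto)
  finally show ?thesis by simp
qed

lemma sum_formula:
  assumes "srt k mm" "1 \<le> g" "g \<le> h" "h \<le> k"
  shows "TA_Z_L mm g h + TA_Z_H mm g h + mm (g - 1) = (\<Sum>i\<in>{1..h}. mm i)"
proof -
  have "TA_Z_H mm g h + (\<Sum>i\<in>{g..h}. mm (g - 1)) = (\<Sum>i\<in>{g..h}. mm i - mm (g - 1) + mm (g - 1))"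
    unfolding TA_Z_H_def sum.distrib by simp
  also have "\<dots> = (\<Sum>i\<in>{g..h}. mm i)"
    by (rule sum.cong) (use assms srt_mono[of k mm] in auto)
  finally have zh: "TA_Z_H mm g h + (Suc h - g) * mm (g - 1) = (\<Sum>i\<in>{g..h}. mm i)" by simp
  have split: "(\<Sum>i\<in>{1..h}. mm i) = (\<Sum>i\<in>{1..<g}. mm i) + (\<Sum>i\<in>{g..h}. mm i)"
    using sum.atLeastLessThan_concat[of 1 g "Suc h" mm] assms
    by (simp add: atLeastLessThanSuc_atLeastAtMost)
  have "Suc h - g = (h - g) + 1" using assms by simp
  then show ?thesis using zh split ZL_formula[OF assms] by (simp add: algebra_simps)
qed

lemma count_lt: "1 \<le> z \<Longrightarrow> TA_count S z \<le> z - 1"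
proof (cases S)
  case Nil then show ?thesis by (simp add: TA_count_eq cnt_def)
next
  case (Cons y ys)
  assume z: "1 \<le> z"
  have "TA_count S z = cnt y ys (z - 1)" using Cons z by (simp add: TA_count_eq cnt_Cons)
  also have "\<dots> \<le> length (take (z - 1) ys)" unfolding cnt_def by (rule length_filter_le)
  also have "\<dots> \<le> z - 1" by simp
  finally show ?thesis .
qed

lemma climb:
  assumes "1 \<le> g" "g \<le> h" "h \<le> k" "mm 0 = 0" "mm (g - 1) > 0"
    "TA_Z_L mm g h \<le> TA_count S (TA_Z_L mm g h + TA_Z_H mm g h)"
  shows "\<exists>g'\<in>{g..h}. TA_test k mm S g'"
  using assms
proof (induction "h - g" arbitrary: g)
  case 0
  then have gh: "g = h" by simp
  show ?case
  proof (cases "mm g = mm (g - 1)")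
    case False
    then show ?thesis using 0 gh unfolding TA_test_def by (intro bexI[of _ g]) (auto intro!: bexI[of _ h])
  next
    case True
    have g2: "2 \<le> g" using 0 by (cases "g = 1") auto
    have "mm (g - 1) = min (mm (g - 1)) (mm (g - 1))" by simp
    also have "\<dots> \<le> TA_Z_L mm g g" unfolding TA_Z_L_def
      by (rule member_le_sum) (use g2 in auto)
    finally have zl: "mm (g - 1) \<le> TA_Z_L mm g g" .
    have "TA_Z_H mm g g = 0" unfolding TA_Z_H_def using True by simp
    then have "TA_Z_L mm g g \<le> TA_count S (TA_Z_L mm g g)" using 0 gh by simp
    moreover have "TA_count S (TA_Z_L mm g g) \<le> TA_Z_L mm g g - 1"
      by (rule count_lt) (use zl 0 in auto)
    ultimately show ?thesis using zl 0 by auto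
  qed
next
  case (Suc d)
  show ?case
  proof (cases "mm g = mm (g - 1)")
    case False
    then show ?thesis using Suc.prems unfolding TA_test_def by (intro bexI[of _ g]) (auto intro!: bexI[of _ h])
  next
    case True
    have gh: "g < h" using Suc by simp
    have zl: "TA_Z_L mm (Suc g) h = TA_Z_L mm g h" unfolding TA_Z_L_def using True by simp
    have "TA_Z_H mm g h = (mm g - mm (g - 1)) + (\<Sum>i\<in>{Suc g..h}. mm i - mm (g - 1))"
      unfolding TA_Z_H_def using gh by (simp add: sum.atLeast_Suc_atMost)
    then have zh: "TA_Z_H mm (Suc g) h = TA_Z_H mm g h" unfolding TA_Z_H_def using True by simp
    have "\<exists>g'\<in>{Suc g..h}. TA_test k mm S g'"
      by (rule Suc.hyps(1)) (use Suc.hyps(2) Suc.prems gh True zl zh in auto)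
    then show ?thesis by auto
  qed
qed

lemma srt_dec:
  assumes "srt k mm" "1 \<le> g" "mm (g - 1) < mm g"
  shows "srt k (\<lambda>i. mm i - (if i = g then 1 else 0))"
  unfolding srt_def
proof (intro allI impI)
  fix r assume r: "r < k"
  have le: "mm r \<le> mm (Suc r)" using assms r unfolding srt_def by simp
  show "mm r - (if r = g then 1 else 0) \<le> mm (Suc r) - (if Suc r = g then 1 else 0)"
  proof (cases "Suc r = g")
    case True
    then have "r = g - 1" by simp
    then show ?thesis using assms True by auto
  qed (use le in auto)
qed

lemma sum_dec:
  assumes "finite A" "g \<in> A" "1 \<le> (f::nat\<Rightarrow>nat) g"
  shows "(\<Sum>i\<in>A. f i - (if i = g then 1 else 0)) = sum f A - 1"
proof -
  have "(\<Sum>i\<in>A. f i - (if i = g then 1 else 0)) = (f g - 1) + (\<Sum>i\<in>A - {g}. f i - (if i = g then 1 else 0))"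
    using assms by (simp add: sum.remove)
  also have "(\<Sum>i\<in>A - {g}. f i - (if i = g then 1 else 0)) = (\<Sum>i\<in>A - {g}. f i)"
    by (rule sum.cong) auto
  also have "sum f A = f g + (\<Sum>i\<in>A - {g}. f i)" using assms by (simp add: sum.remove)
  ultimately show ?thesis using assms by simp
qed

lemma sum_nodec:
  assumes "g \<notin> A"
  shows "(\<Sum>i\<in>A. (f::nat\<Rightarrow>nat) i - (if i = g then 1 else 0)) = sum f A"
  by (rule sum.cong) (use assms in auto)

definition Jp :: "nat \<Rightarrow> real \<Rightarrow> nat \<Rightarrow> (nat \<Rightarrow> nat) \<Rightarrow> real list \<Rightarrow> bool" where
  "Jp k H g mm R = (mm (g - 1) = 0 \<or>
     (\<exists>h\<in>{g..k}. TA_Z_L mm g h \<le> cnt H R (TA_Z_L mm g h + TA_Z_H mm g h)))"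

lemma Q_ge: "1 \<le> g - 1 \<Longrightarrow> mm (g - 1) \<le> (\<Sum>i\<in>{1..<g}. (mm::nat\<Rightarrow>nat) i)"
  by (rule member_le_sum) auto

lemma Hstep:
  assumes srt: "srt k mm" and m0: "mm 0 = 0" and g: "1 \<le> g" "g \<le> h" "h \<le> k"
    and lt: "mm (g - 1) < mm g"
    and pass: "TA_Z_L mm g h \<le> TA_count (H # R) (TA_Z_L mm g h + TA_Z_H mm g h)"
  shows "Jp k H g (\<lambda>i. mm i - (if i = g then 1 else 0)) R"
proof -
  define mm' where "mm' = (\<lambda>i. mm i - (if i = g then 1 else 0))"
  define c where "c = mm (g - 1)"
  have c': "mm' (g - 1) = c" unfolding mm'_def c_def using g(1) by auto
  show ?thesis
  proof (cases "c = 0")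
    case True then show ?thesis unfolding Jp_def mm'_def[symmetric] using c' by simp
  next
    case False
    have g2: "1 \<le> g - 1" using False m0 g unfolding c_def by (cases "g = 1") auto
    have srt': "srt k mm'" unfolding mm'_def by (rule srt_dec[OF srt g(1) lt])
    have q1: "(\<Sum>i\<in>{1..<g}. mm' i) = (\<Sum>i\<in>{1..<g}. mm i)"
      unfolding mm'_def by (rule sum_nodec) auto
    have q2: "(\<Sum>i\<in>{1..h}. mm' i) = (\<Sum>i\<in>{1..h}. mm i) - 1"
      unfolding mm'_def by (rule sum_dec) (use g lt in auto)
    have zl: "TA_Z_L mm' g h = TA_Z_L mm g h"
      using ZL_formula[OF srt g] ZL_formula[OF srt' g] q1 c' c_def by simp
    have s1: "TA_Z_L mm g h + TA_Z_H mm g h + c = (\<Sum>i\<in>{1..h}. mm i)"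
      using sum_formula[OF srt g] c_def by simp
    have s2: "TA_Z_L mm' g h + TA_Z_H mm' g h + c = (\<Sum>i\<in>{1..h}. mm' i)"
      using sum_formula[OF srt' g] c' by simp
    have "c \<le> TA_Z_L mm g h" using ZL_formula[OF srt g] Q_ge[OF g2, of mm] c_def by simp
    then have z1: "1 \<le> TA_Z_L mm g h + TA_Z_H mm g h" using False by simp
    have zz: "TA_Z_L mm' g h + TA_Z_H mm' g h = TA_Z_L mm g h + TA_Z_H mm g h - 1"
      using s1 s2 q2 z1 by simp
    have "TA_count (H # R) (TA_Z_L mm g h + TA_Z_H mm g h)
          = cnt H R (TA_Z_L mm g h + TA_Z_H mm g h - 1)"
      using z1 by (simp add: TA_count_eq cnt_Cons)
    then have "TA_Z_L mm' g h \<le> cnt H R (TA_Z_L mm' g h + TA_Z_H mm' g h)"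
      using pass zl zz by simp
    then show ?thesis unfolding Jp_def mm'_def[symmetric] using g by auto
  qed
qed

lemma Lstep:
  assumes srt: "srt k mm" and srt': "srt k mm'" and m0: "mm 0 = 0" and HL: "H < L"
    and p: "1 \<le> p" "1 \<le> mm p" and low: "\<And>i. 1 \<le> i \<Longrightarrow> i < p \<Longrightarrow> mm i = 0"
    and mm': "mm' = (\<lambda>i. mm i - (if i = p then 1 else 0))"
    and g: "1 \<le> g" and J: "Jp k H g mm (L # R)"
  shows "Jp k H g mm' R"
proof -
  define c where "c = mm (g - 1)"
  have cc: "mm' (g - 1) \<le> c" unfolding mm' c_def by simp
  show ?thesis
  proof (cases "c = 0 \<or> mm' (g - 1) = 0")
    case True then show ?thesis unfolding Jp_def using cc by auto
  next
    case False
    then have c0: "c > 0" and c'0: "mm' (g - 1) > 0" by auto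
    have g2: "1 \<le> g - 1" using c0 m0 g unfolding c_def by (cases "g = 1") auto
    have pg: "p \<le> g - 1" using low[of "g - 1"] g2 c0 unfolding c_def by force
    obtain h where h: "h \<in> {g..k}" and pass: "TA_Z_L mm g h \<le> cnt H (L # R) (TA_Z_L mm g h + TA_Z_H mm g h)"
      using J c0 unfolding Jp_def c_def by auto
    have gh: "g \<le> h" "h \<le> k" using h by auto
    have q1: "(\<Sum>i\<in>{1..<g}. mm' i) = (\<Sum>i\<in>{1..<g}. mm i) - 1"
      unfolding mm' by (rule sum_dec) (use p pg in auto)
    have q2: "(\<Sum>i\<in>{1..h}. mm' i) = (\<Sum>i\<in>{1..h}. mm i) - 1"
      unfolding mm' by (rule sum_dec) (use p pg gh in auto)
    have Qg: "c \<le> (\<Sum>i\<in>{1..<g}. mm i)" using Q_ge[OF g2, of mm] c_def by simp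
    have zl: "TA_Z_L mm g h = (\<Sum>i\<in>{1..<g}. mm i) + (h - g) * c"
      using ZL_formula[OF srt g gh] c_def by simp
    have zl': "TA_Z_L mm' g h = (\<Sum>i\<in>{1..<g}. mm i) - 1 + (h - g) * mm' (g - 1)"
      using ZL_formula[OF srt' g gh] q1 by simp
    have mul: "(h - g) * mm' (g - 1) \<le> (h - g) * c" using cc by simp
    have s1: "TA_Z_L mm g h + TA_Z_H mm g h + c = (\<Sum>i\<in>{1..h}. mm i)"
      using sum_formula[OF srt g gh] c_def by simp
    have s2: "TA_Z_L mm' g h + TA_Z_H mm' g h + mm' (g - 1) = (\<Sum>i\<in>{1..h}. mm i) - 1"
      using sum_formula[OF srt' g gh] q2 by simp
    have z1: "1 \<le> TA_Z_L mm g h + TA_Z_H mm g h" using zl Qg c0 by simp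
    have le1: "TA_Z_L mm g h + TA_Z_H mm g h - 1 \<le> TA_Z_L mm' g h + TA_Z_H mm' g h"
      using s1 s2 cc z1 by linarith
    have "cnt H (L # R) (TA_Z_L mm g h + TA_Z_H mm g h) = 1 + cnt H R (TA_Z_L mm g h + TA_Z_H mm g h - 1)"
      using z1 HL by (simp add: cnt_Cons)
    also have "\<dots> \<le> 1 + cnt H R (TA_Z_L mm' g h + TA_Z_H mm' g h)"
      using cnt_mono[OF le1] by simp
    finally have "TA_Z_L mm g h \<le> 1 + cnt H R (TA_Z_L mm' g h + TA_Z_H mm' g h)" using pass by simp
    moreover have "TA_Z_L mm' g h + 1 \<le> TA_Z_L mm g h" using zl zl' mul Qg c0 by linarith
    ultimately have "TA_Z_L mm' g h \<le> cnt H R (TA_Z_L mm' g h + TA_Z_H mm' g h)" by simp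
    then show ?thesis unfolding Jp_def using h by auto
  qed
qed

lemma Hdec:
  assumes srt: "srt k (mmof q)" and g: "1 \<le> g" "g \<le> k"
    and J: "Jp k H g (mmof q) (H # R)" and nz: "TA k q (H # R) \<noteq> 0"
  shows "g \<le> TA k q (H # R)"
proof -
  define x where "x = TA k q (H # R)"
  have x: "1 \<le> x" "x \<le> k" "TA_test k (mmof q) (H # R) x" using TA_nz[OF nz] x_def by auto
  have neq: "mmof q x \<noteq> mmof q (x - 1)" using x(3) unfolding TA_test_def by simp
  have m0: "mmof q 0 = 0" by (simp add: mmof_def)
  show ?thesis
  proof (cases "mmof q (g - 1) = 0")
    case True
    show ?thesis
    proof (rule ccontr)
      assume "\<not> g \<le> TA k q (H # R)"
      then have "x \<le> g - 1" unfolding x_def by simp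
      then have "mmof q x \<le> 0" "mmof q (x - 1) \<le> mmof q x"
        using srt_mono[OF srt, of x "g - 1"] srt_mono[OF srt, of "x - 1" x] True g by auto
      then show False using neq by simp
    qed
  next
    case False
    then obtain h where h: "h \<in> {g..k}"
      and pass: "TA_Z_L (mmof q) g h \<le> cnt H (H # R) (TA_Z_L (mmof q) g h + TA_Z_H (mmof q) g h)"
      using J unfolding Jp_def by auto
    have "\<exists>g'\<in>{g..h}. TA_test k (mmof q) (H # R) g'"
      by (rule climb) (use h g False m0 pass in \<open>auto simp: TA_count_eq\<close>)
    then obtain g' where "g' \<in> {g..h}" "TA_test k (mmof q) (H # R) g'" by auto
    then show ?thesis using TA_ge[of g' k q "H # R"] g h by auto
  qed
qed

lemma Llow:
  assumes srt: "srt k (mmof q)" and le: "\<forall>y\<in>set R. y \<le> L" and nz: "TA k q (L # R) \<noteq> 0"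
    and i: "1 \<le> i" "i < TA k q (L # R)"
  shows "q i = 0"
proof -
  define x where "x = TA k q (L # R)"
  have x: "1 \<le> x" "x \<le> k" "TA_test k (mmof q) (L # R) x" using TA_nz[OF nz] x_def by auto
  then obtain h where h: "h \<in> {x..k}"
    and pass: "TA_Z_L (mmof q) x h \<le> TA_count (L # R) (TA_Z_L (mmof q) x h + TA_Z_H (mmof q) x h)"
    unfolding TA_test_def by auto
  have "filter (\<lambda>y. L < y) (take z R) = []" for z
    using le by (fastforce simp: filter_empty_conv dest: in_set_takeD)
  then have "TA_count (L # R) z = 0" for z
    by (cases z) (auto simp: TA_count_eq cnt_def)
  then have zl: "TA_Z_L (mmof q) x h = 0" using pass by simp
  have x2: "2 \<le> x" using i x_def by simp
  have "min (mmof q (x - 1)) (mmof q (x - 1)) \<le> TA_Z_L (mmof q) x h" unfolding TA_Z_L_def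
    by (rule member_le_sum) (use x2 h in auto)
  then have "mmof q (x - 1) = 0" using zl by simp
  then have "mmof q i = 0" using srt_mono[OF srt, of i "x - 1"] i x x_def by simp
  then show ?thesis using i by (simp add: mmof_def)
qed

context
  fixes k n :: nat and m :: "nat \<Rightarrow> nat" and T :: "nat \<Rightarrow> real" and H L :: real
  assumes sorted: "\<And>r. 1 \<le> r \<Longrightarrow> r < k \<Longrightarrow> m r \<le> m (Suc r)"
    and n_def: "n = (\<Sum>r\<in>{1..k}. m r)"
    and HL: "0 \<le> H" "H < L"
    and T_vals: "\<And>t. 1 \<le> t \<Longrightarrow> t \<le> n \<Longrightarrow> T t = H \<or> T t = L"
begin

abbreviation "qq \<equiv> alg_q k m n T"
abbreviation "RR s \<equiv> map T [Suc s..<Suc n]"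
abbreviation "xx \<equiv> alg_x k m n T"

lemma xx_Suc: "xx (Suc s) = TA k (qq s) (RR s)"
  by (simp add: alg_x_def)

lemma qq_Suc: "qq (Suc s) = (\<lambda>r. qq s r - (if xx (Suc s) = r then 1 else 0))"
  by (simp add: alg_x_def Let_def)

lemma RR_Cons: "s < n \<Longrightarrow> RR s = T (Suc s) # RR (Suc s)"
  by (subst upt_conv_Cons) auto

lemma RR_vals: "y \<in> set (RR s) \<Longrightarrow> y = H \<or> y = L"
proof -
  assume "y \<in> set (RR s)"
  then obtain t where "Suc s \<le> t" "t \<le> n" "y = T t"
    by (auto simp del: upt_Suc)
  then show ?thesis using T_vals[of t] by auto
qed

lemma step_gen:
  assumes srt: "srt k (mmof q)" and sum: "(\<Sum>r\<in>{1..k}. q r) > 0"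
  shows "TA k q S \<noteq> 0 \<and> 1 \<le> TA k q S \<and> TA k q S \<le> k \<and> TA_test k (mmof q) S (TA k q S)
     \<and> mmof q (TA k q S - 1) < mmof q (TA k q S)"
proof -
  have "\<exists>r\<in>{1..k}. q r > 0"
  proof (rule ccontr)
    assume "\<not> ?thesis"
    then have "\<forall>r\<in>{1..k}. q r = 0" by auto
    then have "(\<Sum>r\<in>{1..k}. q r) = 0" by simp
    then show False using sum by simp
  qed
  then obtain r where r: "r \<in> {1..k}" "q r > 0" by blast
  have nz: "TA k q S \<noteq> 0" using TA_pos[of r k q S] r by auto
  have p: "1 \<le> TA k q S" "TA k q S \<le> k" "TA_test k (mmof q) S (TA k q S)" using TA_nz[OF nz] by auto
  have "mmof q (TA k q S - 1) \<le> mmof q (TA k q S)" using srt_mono[OF srt] p by simp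
  moreover have "mmof q (TA k q S) \<noteq> mmof q (TA k q S - 1)" using p(3) unfolding TA_test_def by simp
  ultimately show ?thesis using nz p by simp
qed

lemma mmof_dec: "x \<noteq> 0 \<Longrightarrow> mmof (\<lambda>r. q r - (if x = r then 1 else 0)) = (\<lambda>i. mmof q i - (if i = x then 1 else 0))"
  by (auto simp: mmof_def)

lemma inv: "s \<le> n \<Longrightarrow> srt k (mmof (qq s)) \<and> (\<Sum>r\<in>{1..k}. qq s r) = n - s"
proof (induction s)
  case 0
  have "srt k (mmof m)" unfolding srt_def mmof_def using sorted by auto
  then show ?case using n_def by simp
next
  case (Suc s)
  then have srt: "srt k (mmof (qq s))" and sm: "(\<Sum>r\<in>{1..k}. qq s r) = n - s" by auto
  define x where "x = xx (Suc s)"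
  have P: "x \<noteq> 0 \<and> 1 \<le> x \<and> x \<le> k \<and> mmof (qq s) (x - 1) < mmof (qq s) x"
    using step_gen[OF srt, of "RR s"] sm Suc.prems unfolding x_def xx_Suc by simp
  have e: "mmof (qq (Suc s)) = (\<lambda>i. mmof (qq s) i - (if i = x then 1 else 0))"
    unfolding qq_Suc x_def[symmetric] using P by (simp add: mmof_dec)
  have "srt k (mmof (qq (Suc s)))" unfolding e by (rule srt_dec) (use srt P in auto)
  moreover have "(\<Sum>r\<in>{1..k}. qq (Suc s) r) = (\<Sum>r\<in>{1..k}. qq s r) - 1"
  proof -
    have "(\<Sum>r\<in>{1..k}. qq (Suc s) r) = (\<Sum>r\<in>{1..k}. qq s r - (if r = x then 1 else 0))"
      unfolding qq_Suc x_def[symmetric] by (rule sum.cong) auto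
    also have "\<dots> = (\<Sum>r\<in>{1..k}. qq s r) - 1"
      by (rule sum_dec) (use P in \<open>auto simp: mmof_def split: if_splits\<close>)
    finally show ?thesis .
  qed
  ultimately show ?case using sm by simp
qed

lemma stp:
  assumes "s < n"
  shows "xx (Suc s) \<noteq> 0 \<and> 1 \<le> xx (Suc s) \<and> xx (Suc s) \<le> k
     \<and> TA_test k (mmof (qq s)) (RR s) (xx (Suc s))
     \<and> mmof (qq s) (xx (Suc s) - 1) < mmof (qq s) (xx (Suc s))
     \<and> mmof (qq (Suc s)) = (\<lambda>i. mmof (qq s) i - (if i = xx (Suc s) then 1 else 0))
     \<and> srt k (mmof (qq s)) \<and> srt k (mmof (qq (Suc s)))"
proof -
  have I: "srt k (mmof (qq s))" "(\<Sum>r\<in>{1..k}. qq s r) = n - s" using inv[of s] assms by auto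
  have I2: "srt k (mmof (qq (Suc s)))" using inv[of "Suc s"] assms by auto
  have P: "xx (Suc s) \<noteq> 0 \<and> 1 \<le> xx (Suc s) \<and> xx (Suc s) \<le> k
     \<and> TA_test k (mmof (qq s)) (RR s) (xx (Suc s))
     \<and> mmof (qq s) (xx (Suc s) - 1) < mmof (qq s) (xx (Suc s))"
    using step_gen[OF I(1), of "RR s"] I(2) assms unfolding xx_Suc by simp
  have e: "mmof (qq (Suc s)) = (\<lambda>i. mmof (qq s) i - (if i = xx (Suc s) then 1 else 0))"
    unfolding qq_Suc using P by (simp add: mmof_dec)
  show ?thesis using P e I I2 by blast
qed

lemma decr: "s \<le> s' \<Longrightarrow> qq s' r \<le> qq s r"
proof (induction s' rule: dec_induct)
  case (step s')
  have "qq (Suc s') r \<le> qq s' r" unfolding qq_Suc by simp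
  then show ?case using step by simp
qed simp

lemma Jstart:
  assumes s: "s < n" and TH: "T (Suc s) = H"
  shows "Jp k H (xx (Suc s)) (mmof (qq (Suc s))) (RR (Suc s))"
proof -
  note P = stp[OF s]
  obtain h where h: "h \<in> {xx (Suc s)..k}" and pass:
    "TA_Z_L (mmof (qq s)) (xx (Suc s)) h \<le> TA_count (RR s)
        (TA_Z_L (mmof (qq s)) (xx (Suc s)) h + TA_Z_H (mmof (qq s)) (xx (Suc s)) h)"
    using P unfolding TA_test_def by auto
  have R: "RR s = H # RR (Suc s)" using RR_Cons[OF s] TH by simp
  have "Jp k H (xx (Suc s)) (\<lambda>i. mmof (qq s) i - (if i = xx (Suc s) then 1 else 0)) (RR (Suc s))"
    by (rule Hstep) (use P h pass R in \<open>auto simp: mmof_def\<close>)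
  then show ?thesis using P by simp
qed

lemma Jstep:
  assumes s: "s < n" and TL: "T (Suc s) = L" and g: "1 \<le> g"
    and J: "Jp k H g (mmof (qq s)) (RR s)"
  shows "Jp k H g (mmof (qq (Suc s))) (RR (Suc s))"
proof -
  note P = stp[OF s]
  have R: "RR s = L # RR (Suc s)" using RR_Cons[OF s] TL by simp
  have le: "\<forall>y\<in>set (RR (Suc s)). y \<le> L" using RR_vals HL by fastforce
  have low: "mmof (qq s) i = 0" if "1 \<le> i" "i < xx (Suc s)" for i
  proof -
    have "qq s i = 0"
      by (rule Llow[of k "qq s" "RR (Suc s)" L i]) (use P le that R in \<open>auto simp: xx_Suc\<close>)
    then show ?thesis by (simp add: mmof_def)
  qed
  have srt: "srt k (mmof (qq s))" and srt': "srt k (mmof (qq (Suc s)))"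
    and e: "mmof (qq (Suc s)) = (\<lambda>i. mmof (qq s) i - (if i = xx (Suc s) then 1 else 0))"
    and p1: "1 \<le> xx (Suc s)"
    and lt: "mmof (qq s) (xx (Suc s) - 1) < mmof (qq s) (xx (Suc s))" using P by blast+
  have p2: "1 \<le> mmof (qq s) (xx (Suc s))" using lt by simp
  have m0: "mmof (qq s) 0 = 0" by (simp add: mmof_def)
  have J': "Jp k H g (mmof (qq s)) (L # RR (Suc s))" using J unfolding R .
  show ?thesis
    by (rule Lstep[OF srt srt' m0 HL(2) p1 p2 low e g J'])
qed

lemma Jdec:
  assumes s: "s < n" and TH: "T (Suc s) = H" and g: "1 \<le> g" "g \<le> k"
    and J: "Jp k H g (mmof (qq s)) (RR s)"
  shows "g \<le> xx (Suc s)"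
proof -
  note P = stp[OF s]
  have R: "RR s = H # RR (Suc s)" using RR_Cons[OF s] TH by simp
  have srt: "srt k (mmof (qq s))" using P by blast
  have nz: "TA k (qq s) (H # RR (Suc s)) \<noteq> 0" using conjunct1[OF P] unfolding xx_Suc R .
  have J': "Jp k H g (mmof (qq s)) (H # RR (Suc s))" using J unfolding R .
  show ?thesis unfolding xx_Suc R
    by (rule Hdec[OF srt g J' nz])
qed

lemma chain:
  assumes s0: "s0 < n" and TH: "T (Suc s0) = H" and sb: "Suc s0 \<le> s" "s \<le> n"
  shows "Jp k H (xx (Suc s0)) (mmof (qq s)) (RR s) \<or> (\<exists>u. Suc s0 < u \<and> u \<le> s \<and> T u = H)"
  using sb
proof (induction s rule: dec_induct)
  case base
  then show ?case using Jstart[OF s0 TH] by simp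
next
  case (step s)
  have g: "1 \<le> xx (Suc s0)" using stp[OF s0] by simp
  have sn: "s < n" using step by simp
  have "T (Suc s) = H \<or> T (Suc s) = L" using T_vals[of "Suc s"] sn by simp
  then show ?case
  proof
    assume "T (Suc s) = H"
    then show ?thesis using step.hyps by (intro disjI2 exI[of _ "Suc s"]) auto
  next
    assume TL: "T (Suc s) = L"
    have IH: "Jp k H (xx (Suc s0)) (mmof (qq s)) (RR s) \<or> (\<exists>u. Suc s0 < u \<and> u \<le> s \<and> T u = H)"
      using step.IH sn by simp
    from IH show ?thesis
    proof
      assume "Jp k H (xx (Suc s0)) (mmof (qq s)) (RR s)"
      then show ?thesis using Jstep[OF sn TL g] by simp
    qed auto
  qed
qed

lemma mainH: "b - a = d \<Longrightarrow> 1 \<le> a \<Longrightarrow> a < b \<Longrightarrow> b \<le> n \<Longrightarrow> T a = H \<Longrightarrow> T b = H \<Longrightarrow> xx a \<le> xx b"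
proof (induction d arbitrary: a b rule: less_induct)
  case (less d)
  obtain s0 where a: "a = Suc s0" using less.prems by (cases a) auto
  have s0: "s0 < n" using less.prems a by simp
  have "Jp k H (xx (Suc s0)) (mmof (qq (b - 1))) (RR (b - 1)) \<or> (\<exists>u. Suc s0 < u \<and> u \<le> b - 1 \<and> T u = H)"
    by (rule chain) (use less.prems a in auto)
  then show ?case
  proof
    assume J: "Jp k H (xx (Suc s0)) (mmof (qq (b - 1))) (RR (b - 1))"
    have g: "1 \<le> xx (Suc s0)" "xx (Suc s0) \<le> k" using stp[OF s0] by auto
    have "xx (Suc s0) \<le> xx (Suc (b - 1))"
      by (rule Jdec) (use less.prems J g in auto)
    then show ?thesis using a less.prems by simp
  next
    assume "\<exists>u. Suc s0 < u \<and> u \<le> b - 1 \<and> T u = H"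
    then obtain u where u: "a < u" "u < b" "T u = H" using a by auto
    have "xx a \<le> xx u" by (rule less.IH[of "u - a"]) (use less.prems u in auto)
    also have "xx u \<le> xx b" by (rule less.IH[of "b - u"]) (use less.prems u in auto)
    finally show ?thesis .
  qed
qed

lemma mainL:
  assumes "1 \<le> a" "a < b" "b \<le> n" "T a = L" "T b = L"
  shows "xx a \<le> xx b"
proof (rule ccontr)
  assume c: "\<not> xx a \<le> xx b"
  obtain s where a: "a = Suc s" using assms by (cases a) auto
  obtain s' where b: "b = Suc s'" using assms by (cases b) auto
  have sn: "s < n" "s' < n" "s \<le> s'" using assms a b by auto
  note Pb = stp[OF sn(2)]
  have "qq s' (xx b) > 0" using Pb b by (auto simp: mmof_def split: if_splits)
  then have pos: "qq s (xx b) > 0" using decr[OF sn(3), of "xx b"] by simp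
  note Pa = stp[OF sn(1)]
  have R: "RR s = L # RR (Suc s)" using RR_Cons[OF sn(1)] assms a by simp
  have le: "\<forall>y\<in>set (RR (Suc s)). y \<le> L" using RR_vals HL by fastforce
  have "qq s (xx b) = 0"
    by (rule Llow[of k "qq s" "RR (Suc s)" L]) (use Pa Pb le R c a b in \<open>auto simp: xx_Suc\<close>)
  then show False using pos by simp
qed

end

theorem lemma5:
  fixes k n :: nat and m :: "nat \<Rightarrow> nat" and T :: "nat \<Rightarrow> real" and H L :: real
    and i j :: nat
  assumes sorted: "\<And>r. 1 \<le> r \<Longrightarrow> r < k \<Longrightarrow> m r \<le> m (Suc r)"
    and n_def: "n = (\<Sum>r\<in>{1..k}. m r)"
    and HL: "0 \<le> H" "H < L"
    and T_vals: "\<And>t. 1 \<le> t \<Longrightarrow> t \<le> n \<Longrightarrow> T t = H \<or> T t = L"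
    and ij: "1 \<le> i" "i < j" "j \<le> n"
    and same: "T i = T j"
  shows "alg_x k m n T i \<le> alg_x k m n T j"
proof -
  have "T i = H \<or> T i = L" using T_vals ij by simp
  then show ?thesis
  proof
    assume "T i = H"
    then show ?thesis using mainH[OF sorted n_def HL T_vals, where a=i and b=j and d="j - i"] ij same by auto
  next
    assume "T i = L"
    then show ?thesis using mainL[OF sorted n_def HL T_vals, where a=i and b=j] ij same by auto
  qed
qed

end
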